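(* Let $A$ be a meet-semilattice and $\kappa$ a regular cardinal. The following are equivalent: (1) every $\kappa$-join in $\mathcal{DM} A$ is distributive; (2) $\mathcal{DM} A$ is a $\kappa$-frame; (3) $\mathcal{BL}_\kappa(\mathcal{DM} A)=\mathcal{DM} A$.
   Context: A meet-semilattice is a poset with all finite meets. $\mathcal{DM} A$ is the complete lattice of normal ideals of $A$ (downsets $N$ with $N=N^{u\ell}$, where ${}^u,{}^\ell$ denote upper and lower bounds). An existing join $\bigvee S$ is distributive if $a\wedge\bigvee S=\bigvee\{a\wedge s:s\in S\}$ for all $a$. A D-ideal is a downset containing $\bigvee S$ for each subset $S$ of it with distributive join; $\mathcal{BL} A$ is the frame of D-ideals, and every normal ideal is a D-ideal, so $\mathcal{DM} A\subseteq\mathcal{BL} A$ (with $\mathcal{BL}(\mathcal{DM} A)$ identified with $\mathcal{BL} A$). A $\kappa$-join is a join of fewer than $\kappa$ elements; a $\kappa$-frame is a meet-semilattice in which all $\kappa$-joins exist and are distributive. $\mathcal{BL}_\kappa(\mathcal{DM} A)$ denotes the sub-$\kappa$-frame of $\mathcal{BL} A$ generated by $\mathcal{DM} A$ (closure of $\mathcal{DM} A$ under finite meets and $\kappa$-joins computed in $\mathcal{BL} A$). *)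

theory Defs
  imports Main
begin

definition ubs :: "'b::order set \<Rightarrow> 'b set" where
  "ubs S = {x. \<forall>s\<in>S. s \<le> x}"

definition lbs :: "'b::order set \<Rightarrow> 'b set" where
  "lbs S = {x. \<forall>s\<in>S. x \<le> s}"

definition is_join :: "'b::order set \<Rightarrow> 'b set \<Rightarrow> 'b \<Rightarrow> bool" where
  "is_join P S j \<longleftrightarrow> j \<in> P \<and> (\<forall>s\<in>S. s \<le> j) \<and> (\<forall>u\<in>P. (\<forall>s\<in>S. s \<le> u) \<longrightarrow> j \<le> u)"

definition is_meet :: "'b::order set \<Rightarrow> 'b set \<Rightarrow> 'b \<Rightarrow> bool" where
  "is_meet P S m \<longleftrightarrow> m \<in> P \<and> (\<forall>s\<in>S. m \<le> s) \<and> (\<forall>u\<in>P. (\<forall>s\<in>S. u \<le> s) \<longrightarrow> u \<le> m)"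

definition meet_semilattice :: "'b::order set \<Rightarrow> bool" where
  "meet_semilattice P \<longleftrightarrow> (\<forall>F. F \<subseteq> P \<and> finite F \<longrightarrow> (\<exists>m. is_meet P F m))"

definition dist_join :: "'b::order set \<Rightarrow> 'b set \<Rightarrow> bool" where
  "dist_join P S \<longleftrightarrow> (\<exists>j. is_join P S j \<and>
     (\<forall>a\<in>P. \<forall>m. is_meet P {a, j} m \<longrightarrow>
        is_join P {x. \<exists>s\<in>S. is_meet P {a, s} x} m))"

definition kappa_frame :: "'b::order set \<Rightarrow> 'k rel \<Rightarrow> bool" where
  "kappa_frame P \<kappa> \<longleftrightarrow> meet_semilattice P \<and>
     (\<forall>S. S \<subseteq> P \<and> ordLess2 (card_of S) \<kappa> \<longrightarrow> (\<exists>j. is_join P S j) \<and> dist_join P S)"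

text \<open>Normal ideals of A (the type 'a): N = N^{ul}.\<close>
definition DM :: "'a::bounded_semilattice_inf_top set set" where
  "DM = {N. N = lbs (ubs N)}"

definition downset :: "'a::order set \<Rightarrow> bool" where
  "downset I \<longleftrightarrow> (\<forall>x y. y \<in> I \<and> x \<le> y \<longrightarrow> x \<in> I)"

definition D_ideal :: "'a::bounded_semilattice_inf_top set \<Rightarrow> bool" where
  "D_ideal I \<longleftrightarrow> downset I \<and>
     (\<forall>S j. S \<subseteq> I \<and> is_join UNIV S j \<and> dist_join UNIV S \<longrightarrow> j \<in> I)"

definition BL :: "'a::bounded_semilattice_inf_top set set" where
  "BL = {I. D_ideal I}"

text \<open>BL_kappa(DM A): the sub-kappa-frame of BL A generated by DM A, i.e. the closure of
  DM A under finite meets and kappa-joins, both computed in BL A.\<close>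
inductive_set BL_kappa_DM :: "'k rel \<Rightarrow> 'a::bounded_semilattice_inf_top set set"
  for \<kappa> :: "'k rel" where
  gen: "N \<in> DM \<Longrightarrow> N \<in> BL_kappa_DM \<kappa>"
| meet: "F \<in> Pow (BL_kappa_DM \<kappa>) \<Longrightarrow> finite F \<Longrightarrow> is_meet BL F m \<Longrightarrow> m \<in> BL_kappa_DM \<kappa>"
| join: "S \<in> Pow (BL_kappa_DM \<kappa>) \<Longrightarrow> ordLess2 (card_of S) \<kappa> \<Longrightarrow> is_join BL S j \<Longrightarrow> j \<in> BL_kappa_DM \<kappa>"
  monos Pow_mono

end

theory Submission
  imports Defs
begin

lemma join_unique: "is_join P S j \<Longrightarrow> is_join P S j' \<Longrightarrow> j = j'"
  unfolding is_join_def by (meson order_antisym)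

lemma is_meet_UNIV2: "is_meet UNIV {a,b} m \<longleftrightarrow> m = inf a (b::'a::semilattice_inf)"
  unfolding is_meet_def by (auto intro: order_antisym)

lemma is_join_UNIV: "is_join UNIV V z \<longleftrightarrow> z \<in> ubs V \<and> z \<in> lbs (ubs V)"
  unfolding is_join_def ubs_def lbs_def by auto

lemma L_ext: "X \<subseteq> lbs (ubs X)"
  unfolding lbs_def ubs_def by auto

lemma L_mono: "X \<subseteq> Y \<Longrightarrow> lbs (ubs X) \<subseteq> lbs (ubs Y)"
  unfolding lbs_def ubs_def by auto

lemma L_idem: "lbs (ubs (lbs (ubs X))) = lbs (ubs X)"
  unfolding lbs_def ubs_def by auto

lemma L_DM: "lbs (ubs X) \<in> DM"
  unfolding DM_def using L_idem by auto

lemma L_down: "y \<in> lbs Z \<Longrightarrow> x \<le> y \<Longrightarrow> x \<in> lbs Z"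
  unfolding lbs_def by (auto intro: order_trans)

lemma DM_down: "N \<in> DM \<Longrightarrow> y \<in> N \<Longrightarrow> x \<le> y \<Longrightarrow> x \<in> N"
proof -
  assume N: "N \<in> DM" and y: "y \<in> N" and xy: "x \<le> y"
  have NN: "N = lbs (ubs N)" using N unfolding DM_def by simp
  have "y \<in> lbs (ubs N)" using y NN by simp
  then have "x \<in> lbs (ubs N)" using xy by (rule L_down)
  then show "x \<in> N" using NN by simp
qed

lemma Inter_DM: "F \<subseteq> DM \<Longrightarrow> \<Inter>F \<in> DM"
proof -
  assume F: "F \<subseteq> DM"
  have "lbs (ubs (\<Inter>F)) \<subseteq> N" if "N \<in> F" for N
  proof -
    have "lbs (ubs (\<Inter>F)) \<subseteq> lbs (ubs N)" using that by (intro L_mono) auto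
    also have "\<dots> = N" using F that unfolding DM_def by auto
    finally show ?thesis .
  qed
  then have "lbs (ubs (\<Inter>F)) \<subseteq> \<Inter>F" by auto
  with L_ext show ?thesis unfolding DM_def by auto
qed

lemma Int_DM: "a \<in> DM \<Longrightarrow> b \<in> DM \<Longrightarrow> a \<inter> b \<in> DM"
  using Inter_DM[of "{a,b}"] by auto

lemma principal_DM: "{x. x \<le> p} \<in> DM"
proof -
  have "lbs (ubs {x. x \<le> p}) = {x. x \<le> p}"
    unfolding lbs_def ubs_def by (auto intro: order_trans)
  then show ?thesis unfolding DM_def by auto
qed

lemma is_meet_DM2:
  assumes a: "a \<in> DM" and b: "b \<in> DM"
  shows "is_meet DM {a,b} m \<longleftrightarrow> m = a \<inter> b"
proof
  assume "is_meet DM {a,b} m"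
  then have "m \<subseteq> a" "m \<subseteq> b" "a \<inter> b \<subseteq> m"
    using Int_DM[OF a b] unfolding is_meet_def by blast+
  then show "m = a \<inter> b" by blast
next
  assume m: "m = a \<inter> b"
  show "is_meet DM {a,b} m" unfolding is_meet_def m
  proof (intro conjI ballI impI)
    show "a \<inter> b \<in> DM" using Int_DM[OF a b] .
    show "a \<inter> b \<subseteq> s" if "s \<in> {a,b}" for s using that by blast
    show "u \<subseteq> a \<inter> b" if "u \<in> DM" "\<forall>s\<in>{a,b}. u \<subseteq> s" for u using that by blast
  qed
qed

lemma DM_join: "S \<subseteq> DM \<Longrightarrow> is_join DM S (lbs (ubs (\<Union>S)))"
proof -
  assume S: "S \<subseteq> DM"
  have "lbs (ubs (\<Union>S)) \<subseteq> u" if "u \<in> DM" "\<forall>s\<in>S. s \<subseteq> u" for u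
  proof -
    have "lbs (ubs (\<Union>S)) \<subseteq> lbs (ubs u)" using that by (intro L_mono) auto
    also have "\<dots> = u" using that unfolding DM_def by auto
    finally show ?thesis .
  qed
  moreover have "s \<subseteq> lbs (ubs (\<Union>S))" if "s \<in> S" for s
    using that L_ext by blast
  ultimately show ?thesis unfolding is_join_def using L_DM by (intro conjI ballI impI)
qed

lemma DM_meet: "F \<subseteq> DM \<Longrightarrow> is_meet DM F (\<Inter>F)"
  unfolding is_meet_def
proof (intro conjI ballI impI)
  assume "F \<subseteq> DM"
  then show "\<Inter>F \<in> DM" by (rule Inter_DM)
  show "\<Inter>F \<subseteq> s" if "s \<in> F" for s using that by blast
  show "u \<subseteq> \<Inter>F" if "\<forall>s\<in>F. u \<subseteq> s" for u using that by blast
qed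

lemma DM_BL: "N \<in> DM \<Longrightarrow> D_ideal N"
proof -
  assume N: "N \<in> DM"
  have "j \<in> N" if "S \<subseteq> N" "is_join UNIV S j" for S j
  proof -
    have "j \<in> lbs (ubs S)" using that(2) is_join_UNIV by blast
    also have "\<dots> \<subseteq> lbs (ubs N)" using that(1) by (rule L_mono)
    also have "\<dots> = N" using N unfolding DM_def by auto
    finally show ?thesis .
  qed
  moreover have "\<forall>x y. y \<in> N \<and> x \<le> y \<longrightarrow> x \<in> N" using DM_down[OF N] by blast
  ultimately show ?thesis unfolding D_ideal_def downset_def by blast
qed


lemma join_cong: "is_join P A j \<Longrightarrow> B = A \<Longrightarrow> m = j \<Longrightarrow> is_join P B m"
  by simp

lemma dist_join_UNIV_meet:
  fixes T :: "'a::semilattice_inf set"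
  assumes "dist_join UNIV T" "is_join UNIV T j"
  shows "is_join UNIV ((\<lambda>s. inf y s) ` T) (inf y j) \<and> dist_join UNIV ((\<lambda>s. inf y s) ` T)"
proof -
  obtain j0 where j0: "is_join UNIV T j0"
    and d: "\<forall>a\<in>UNIV. \<forall>m. is_meet UNIV {a, j0} m \<longrightarrow> is_join UNIV {x. \<exists>s\<in>T. is_meet UNIV {a, s} x} m"
    using assms(1) unfolding dist_join_def by (elim exE conjE)
  have jj: "j0 = j" using join_unique[OF j0 assms(2)] .
  have d': "is_join UNIV ((\<lambda>s. inf a s) ` T) (inf a j)" for a
  proof -
    have "is_meet UNIV {a, j0} (inf a j0)" by (simp add: is_meet_UNIV2)
    then have "is_join UNIV {x. \<exists>s\<in>T. is_meet UNIV {a, s} x} (inf a j0)"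
      using d by blast
    then have "is_join UNIV {x. \<exists>s\<in>T. is_meet UNIV {a, s} x} (inf a j)"
      unfolding jj .
    moreover have "{x. \<exists>s\<in>T. is_meet UNIV {a, s} x} = (\<lambda>s. inf a s) ` T"
      by (auto simp: is_meet_UNIV2)
    ultimately show ?thesis by (rule join_cong[OF _ sym refl])
  qed
  have "is_join UNIV ((\<lambda>s. inf y s) ` T) (inf y j)" by (rule d')
  moreover have "dist_join UNIV ((\<lambda>s. inf y s) ` T)"
    unfolding dist_join_def
  proof (rule exI[of _ "inf y j"], intro conjI allI ballI impI)
    show "is_join UNIV ((\<lambda>s. inf y s) ` T) (inf y j)" by (rule d')
    fix z m assume "is_meet UNIV {z, inf y j} m"
    then have m: "m = inf (inf z y) j" by (simp add: is_meet_UNIV2 inf_assoc)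
    have eq: "{x. \<exists>s\<in>(\<lambda>s. inf y s) ` T. is_meet UNIV {z, s} x} = (\<lambda>s. inf (inf z y) s) ` T"
      unfolding is_meet_UNIV2 by (auto simp: inf_assoc)
    show "is_join UNIV {x. \<exists>s\<in>(\<lambda>s. inf y s) ` T. is_meet UNIV {z, s} x} m"
      by (rule join_cong[OF d'[of "inf z y"] eq m])
  qed
  ultimately show ?thesis by (rule conjI)
qed

lemma frame_law:
  fixes a u :: "'a::bounded_semilattice_inf_top set"
  assumes a: "downset a" and u: "D_ideal u" and Sdown: "\<forall>s\<in>S. downset s"
    and sub: "\<forall>s\<in>S. a \<inter> s \<subseteq> u"
  shows "a \<inter> \<Inter>{I. D_ideal I \<and> \<Union>S \<subseteq> I} \<subseteq> u"
proof -
  define K where "K = {x. \<forall>y\<in>a. inf x y \<in> u}"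
  have ud: "downset u" using u unfolding D_ideal_def by auto
  have "D_ideal K"
    unfolding D_ideal_def
  proof (intro conjI allI impI)
    show "downset K" unfolding downset_def K_def
    proof (intro allI impI CollectI ballI, elim conjE)
      fix x y z assume "y \<in> {x. \<forall>y\<in>a. inf x y \<in> u}" "x \<le> y" "z \<in> a"
      then have "inf y z \<in> u" "inf x z \<le> inf y z" by (auto intro: inf_mono simp: le_infI1)
      then show "inf x z \<in> u" using ud unfolding downset_def by blast
    qed
    fix T j assume T: "T \<subseteq> K \<and> is_join UNIV T j \<and> dist_join UNIV T"
    show "j \<in> K" unfolding K_def
    proof (intro CollectI ballI)
      fix y assume y: "y \<in> a"
      have "is_join UNIV ((\<lambda>s. inf y s) ` T) (inf y j) \<and> dist_join UNIV ((\<lambda>s. inf y s) ` T)"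
        using dist_join_UNIV_meet T by blast
      moreover have "(\<lambda>s. inf y s) ` T \<subseteq> u"
      proof (rule image_subsetI)
        fix s assume "s \<in> T"
        then have "s \<in> K" using T by blast
        then have "inf s y \<in> u" using y unfolding K_def by blast
        then show "inf y s \<in> u" by (simp only: inf_commute)
      qed
      moreover have "\<forall>S j. S \<subseteq> u \<and> is_join UNIV S j \<and> dist_join UNIV S \<longrightarrow> j \<in> u"
        using u unfolding D_ideal_def by (elim conjE)
      ultimately have "inf y j \<in> u" by blast
      then show "inf j y \<in> u" by (simp only: inf_commute)
    qed
  qed
  moreover have "\<Union>S \<subseteq> K"
  proof
    fix x assume "x \<in> \<Union>S"
    then obtain s where s: "s \<in> S" "x \<in> s" by auto
    have "inf x y \<in> u" if "y \<in> a" for y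
    proof -
      have "inf x y \<in> s" using Sdown s unfolding downset_def by (meson inf_le1)
      moreover have "inf x y \<in> a" using a that unfolding downset_def by (meson inf_le2)
      ultimately show ?thesis using sub s by blast
    qed
    then show "x \<in> K" unfolding K_def by blast
  qed
  ultimately have KK: "\<Inter>{I. D_ideal I \<and> \<Union>S \<subseteq> I} \<subseteq> K" by (intro Inter_lower CollectI conjI)
  show ?thesis
  proof
    fix x assume "x \<in> a \<inter> \<Inter>{I. D_ideal I \<and> \<Union>S \<subseteq> I}"
    then have "x \<in> a" "x \<in> K" using KK by blast+
    then have "inf x x \<in> u" unfolding K_def by blast
    then show "x \<in> u" by simp
  qed
qed


lemma meet_unique:
  assumes A: "is_meet P S j" and B: "is_meet P S j'"
  shows "j = j'"
proof (rule order_antisym)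
  have "j \<in> P" "\<forall>s\<in>S. j \<le> s" using A unfolding is_meet_def by blast+
  moreover have "\<forall>u\<in>P. (\<forall>s\<in>S. u \<le> s) \<longrightarrow> u \<le> j'" using B unfolding is_meet_def by (elim conjE)
  ultimately show "j \<le> j'" by blast
  have "j' \<in> P" "\<forall>s\<in>S. j' \<le> s" using B unfolding is_meet_def by blast+
  moreover have "\<forall>u\<in>P. (\<forall>s\<in>S. u \<le> s) \<longrightarrow> u \<le> j" using A unfolding is_meet_def by (elim conjE)
  ultimately show "j' \<le> j" by blast
qed

lemma Inter_BL:
  assumes H: "\<forall>I\<in>\<I>. D_ideal I"
  shows "D_ideal (\<Inter>\<I>)"
  unfolding D_ideal_def
proof (intro conjI allI impI)
  show "downset (\<Inter>\<I>)" unfolding downset_def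
  proof (intro allI impI)
    fix x y assume xy: "y \<in> \<Inter>\<I> \<and> x \<le> y"
    show "x \<in> \<Inter>\<I>"
    proof (rule InterI)
      fix I assume I: "I \<in> \<I>"
      then have "downset I" using H unfolding D_ideal_def by blast
      moreover have "y \<in> I" using xy I by blast
      ultimately show "x \<in> I" using xy unfolding downset_def by blast
    qed
  qed
  fix S j assume Sj: "S \<subseteq> \<Inter>\<I> \<and> is_join UNIV S j \<and> dist_join UNIV S"
  show "j \<in> \<Inter>\<I>"
  proof (rule InterI)
    fix I assume I: "I \<in> \<I>"
    then have "\<forall>S j. S \<subseteq> I \<and> is_join UNIV S j \<and> dist_join UNIV S \<longrightarrow> j \<in> I"
      using H unfolding D_ideal_def by blast
    moreover have "S \<subseteq> I" using Sj I by blast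
    ultimately show "j \<in> I" using Sj by blast
  qed
qed

lemma BL_iff: "u \<in> BL \<longleftrightarrow> D_ideal u"
  unfolding BL_def by simp

lemma key:
  assumes S: "S \<subseteq> DM" and d: "dist_join DM S" and I: "D_ideal I" and sub: "\<Union>S \<subseteq> I"
  shows "lbs (ubs (\<Union>S)) \<subseteq> I"
proof -
  let ?L = "lbs (ubs (\<Union>S))"
  obtain j where j: "is_join DM S j"
    and dd: "\<forall>a\<in>DM. \<forall>m. is_meet DM {a,j} m \<longrightarrow> is_join DM {x. \<exists>s\<in>S. is_meet DM {a,s} x} m"
    using d unfolding dist_join_def by (elim exE conjE)
  have jL: "j = ?L" using join_unique[OF j DM_join[OF S]] .
  have jDM: "j \<in> DM" using j unfolding is_join_def by (elim conjE)
  have star: "{x. x \<le> p} \<inter> ?L = lbs (ubs ({x. x \<le> p} \<inter> \<Union>S))" for p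
  proof -
    let ?P = "{x. x \<le> p}"
    have "is_meet DM {?P, j} (?P \<inter> j)" by (simp only: is_meet_DM2[OF principal_DM[of p] jDM])
    then have J0: "is_join DM {x. \<exists>s\<in>S. is_meet DM {?P,s} x} (?P \<inter> j)"
      by (rule dd[rule_format, OF principal_DM[of p]])
    have mm: "is_meet DM {?P,s} x \<longleftrightarrow> x = ?P \<inter> s" if "s \<in> S" for s x
    proof -
      have "s \<in> DM" using S that by blast
      then show ?thesis by (rule is_meet_DM2[OF principal_DM[of p]])
    qed
    have E: "{x. \<exists>s\<in>S. is_meet DM {?P,s} x} = (\<lambda>s. ?P \<inter> s) ` S"
    proof (rule set_eqI)
      fix x
      have "x \<in> {x. \<exists>s\<in>S. is_meet DM {?P,s} x} \<longleftrightarrow> (\<exists>s\<in>S. is_meet DM {?P,s} x)"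
        by (rule mem_Collect_eq)
      also have "\<dots> \<longleftrightarrow> (\<exists>s\<in>S. x = ?P \<inter> s)"
        by (rule bex_cong[OF refl mm])
      also have "\<dots> \<longleftrightarrow> x \<in> (\<lambda>s. ?P \<inter> s) ` S" by blast
      finally show "x \<in> {x. \<exists>s\<in>S. is_meet DM {?P,s} x} \<longleftrightarrow> x \<in> (\<lambda>s. ?P \<inter> s) ` S" .
    qed
    have 1: "is_join DM ((\<lambda>s. ?P \<inter> s) ` S) (?P \<inter> j)" by (rule join_cong[OF J0 E[symmetric] refl])
    have "(\<lambda>s. ?P \<inter> s) ` S \<subseteq> DM"
    proof (rule image_subsetI)
      fix s assume "s \<in> S"
      then have "s \<in> DM" using S by blast
      then show "?P \<inter> s \<in> DM" by (rule Int_DM[OF principal_DM[of p]])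
    qed
    then have 2: "is_join DM ((\<lambda>s. ?P \<inter> s) ` S) (lbs (ubs (\<Union>((\<lambda>s. ?P \<inter> s) ` S))))" by (rule DM_join)
    have 3: "\<Union>((\<lambda>s. ?P \<inter> s) ` S) = ?P \<inter> \<Union>S" by blast
    have A: "?P \<inter> j = lbs (ubs (\<Union>((\<lambda>s. ?P \<inter> s) ` S)))" by (rule join_unique[OF 1 2])
    have "?P \<inter> ?L = ?P \<inter> j" by (simp only: jL)
    also have "\<dots> = lbs (ubs (\<Union>((\<lambda>s. ?P \<inter> s) ` S)))" by (rule A)
    also have "\<dots> = lbs (ubs (?P \<inter> \<Union>S))" by (simp only: 3)
    finally show ?thesis .
  qed
  show ?thesis
  proof
    fix x assume x: "x \<in> ?L"
    define U where "U = {y. y \<le> x} \<inter> \<Union>S"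
    have UI: "U \<subseteq> I" using sub U_def by auto
    have jU: "is_join UNIV U x"
      unfolding is_join_UNIV
    proof
      show "x \<in> ubs U" unfolding U_def ubs_def by auto
      have "x \<in> {y. y \<le> x} \<inter> ?L" using x by simp
      then show "x \<in> lbs (ubs U)" unfolding U_def by (simp only: star)
    qed
    have dU: "dist_join UNIV U"
      unfolding dist_join_def
    proof (rule exI[of _ x], intro conjI allI ballI impI)
      show "is_join UNIV U x" by (rule jU)
      fix a m assume "is_meet UNIV {a, x} m"
      then have m: "m = inf a x" by (simp add: is_meet_UNIV2)
      have eq: "{z. \<exists>u\<in>U. is_meet UNIV {a,u} z} = {y. y \<le> inf a x} \<inter> \<Union>S"
      proof (rule set_eqI, rule iffI)
        fix z assume "z \<in> {z. \<exists>u\<in>U. is_meet UNIV {a,u} z}"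
        then obtain u s where us: "u \<le> x" "s \<in> S" "u \<in> s" "z = inf a u"
          by (auto simp: is_meet_UNIV2 U_def)
        have "s \<in> DM" using S us(2) by blast
        then have "inf a u \<in> s" by (rule DM_down[OF _ us(3)]) simp
        moreover have "inf a u \<le> inf a x" using us by (simp add: le_infI2)
        ultimately show "z \<in> {y. y \<le> inf a x} \<inter> \<Union>S" unfolding us(4) using us(2) by blast
      next
        fix z assume z: "z \<in> {y. y \<le> inf a x} \<inter> \<Union>S"
        then have za: "z \<le> a" "z \<le> x" "z \<in> \<Union>S" by simp_all
        then have zU: "z \<in> U" unfolding U_def by simp
        have "inf a z = z" using za(1) by (rule inf_absorb2)
        then have "is_meet UNIV {a,z} z" unfolding is_meet_UNIV2 by (rule sym)
        then show "z \<in> {z. \<exists>u\<in>U. is_meet UNIV {a,u} z}" using zU by blast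
      qed
      have "inf a x \<in> ?L" using L_down[of x "ubs (\<Union>S)" "inf a x"] x by simp
      then have "inf a x \<in> {y. y \<le> inf a x} \<inter> ?L" by simp
      then have "inf a x \<in> lbs (ubs ({y. y \<le> inf a x} \<inter> \<Union>S))" by (simp only: star)
      moreover have "inf a x \<in> ubs ({y. y \<le> inf a x} \<inter> \<Union>S)" unfolding ubs_def by auto
      ultimately have "is_join UNIV ({y. y \<le> inf a x} \<inter> \<Union>S) (inf a x)"
        by (simp only: is_join_UNIV)
      then show "is_join UNIV {z. \<exists>u\<in>U. is_meet UNIV {a,u} z} m"
        by (rule join_cong[OF _ eq m])
    qed
    have "\<forall>S j. S \<subseteq> I \<and> is_join UNIV S j \<and> dist_join UNIV S \<longrightarrow> j \<in> I"
      using I unfolding D_ideal_def by (elim conjE)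
    then show "x \<in> I" using UI jU dU by blast
  qed
qed

lemma BLk_sub_DM:
  assumes kf: "kappa_frame (DM :: 'a::bounded_semilattice_inf_top set set) \<kappa>"
  shows "N \<in> BL_kappa_DM \<kappa> \<Longrightarrow> (N :: 'a set) \<in> DM"
proof (induction rule: BL_kappa_DM.induct)
  case (gen N) then show ?case .
next
  case (meet F m)
  then have F: "F \<subseteq> DM" by blast
  have "is_meet BL F (\<Inter>F)"
    unfolding is_meet_def
  proof (intro conjI ballI impI)
    show "\<Inter>F \<in> BL" unfolding BL_iff by (rule DM_BL[OF Inter_DM[OF F]])
    show "\<Inter>F \<subseteq> s" if "s \<in> F" for s using that by blast
    show "u \<subseteq> \<Inter>F" if "u \<in> BL" "\<forall>s\<in>F. u \<subseteq> s" for u using that(2) by blast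
  qed
  then have "m = \<Inter>F" by (rule meet_unique[OF \<open>is_meet BL F m\<close>])
  then show ?case using Inter_DM[OF F] by simp
next
  case (join S j)
  then have S: "S \<subseteq> DM" by blast
  have card: "ordLess2 (card_of S) \<kappa>" using join by blast
  have kf': "\<forall>S. S \<subseteq> (DM :: 'a set set) \<and> ordLess2 (card_of S) \<kappa> \<longrightarrow> (\<exists>j. is_join DM S j) \<and> dist_join DM S"
    using kf unfolding kappa_frame_def by (elim conjE)
  have d: "dist_join DM S" using kf'[rule_format, OF conjI[OF S card]] by (elim conjE)
  have "is_join BL S (lbs (ubs (\<Union>S)))"
    unfolding is_join_def
  proof (intro conjI ballI impI)
    show "lbs (ubs (\<Union>S)) \<in> BL" unfolding BL_iff by (rule DM_BL[OF L_DM])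
    show "s \<subseteq> lbs (ubs (\<Union>S))" if "s \<in> S" for s using that L_ext by blast
    show "lbs (ubs (\<Union>S)) \<subseteq> u" if "u \<in> BL" "\<forall>s\<in>S. s \<subseteq> u" for u
    proof (rule key[OF S d])
      show "D_ideal u" using that(1) unfolding BL_iff .
      show "\<Union>S \<subseteq> u" using that(2) by blast
    qed
  qed
  then have "j = lbs (ubs (\<Union>S))" by (rule join_unique[OF \<open>is_join BL S j\<close>])
  then show ?case using L_DM by simp
qed

theorem theorem4p4:
  fixes \<kappa> :: "'k rel"
  assumes "Card_order \<kappa>" and "infinite (Field \<kappa>)" and "regularCard \<kappa>"
  shows "((\<forall>S. S \<subseteq> (DM :: 'a::bounded_semilattice_inf_top set set) \<and> ordLess2 (card_of S) \<kappa>
             \<longrightarrow> dist_join DM S)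
          \<longleftrightarrow> kappa_frame (DM :: 'a set set) \<kappa>)
       \<and> (kappa_frame (DM :: 'a set set) \<kappa> \<longleftrightarrow> BL_kappa_DM \<kappa> = (DM :: 'a set set))"
proof -
  have ms: "meet_semilattice (DM :: 'a set set)"
    unfolding meet_semilattice_def
  proof (intro allI impI)
    fix F :: "'a set set" assume "F \<subseteq> DM \<and> finite F"
    then have "F \<subseteq> DM" by (elim conjE)
    then have "is_meet DM F (\<Inter>F)" by (rule DM_meet)
    then show "\<exists>m. is_meet DM F m" by (rule exI)
  qed
  have P1: "(\<forall>S. S \<subseteq> (DM :: 'a set set) \<and> ordLess2 (card_of S) \<kappa> \<longrightarrow> dist_join DM S)
          \<longleftrightarrow> kappa_frame (DM :: 'a set set) \<kappa>"
    unfolding kappa_frame_def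
  proof
    assume H: "\<forall>S. S \<subseteq> (DM :: 'a set set) \<and> ordLess2 (card_of S) \<kappa> \<longrightarrow> dist_join DM S"
    show "meet_semilattice (DM :: 'a set set) \<and>
      (\<forall>S. S \<subseteq> (DM :: 'a set set) \<and> ordLess2 (card_of S) \<kappa> \<longrightarrow> (\<exists>j. is_join DM S j) \<and> dist_join DM S)"
    proof (rule conjI[OF ms], intro allI impI)
      fix S :: "'a set set"
      assume S: "S \<subseteq> DM \<and> ordLess2 (card_of S) \<kappa>"
      have "S \<subseteq> DM" using S by (elim conjE)
      then have "is_join DM S (lbs (ubs (\<Union>S)))" by (rule DM_join)
      then show "(\<exists>j. is_join DM S j) \<and> dist_join DM S"
        using H[rule_format, OF S] by blast
    qed
  next
    assume H: "meet_semilattice (DM :: 'a set set) \<and>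
      (\<forall>S. S \<subseteq> (DM :: 'a set set) \<and> ordLess2 (card_of S) \<kappa> \<longrightarrow> (\<exists>j. is_join DM S j) \<and> dist_join DM S)"
    have H2: "\<forall>S. S \<subseteq> (DM :: 'a set set) \<and> ordLess2 (card_of S) \<kappa> \<longrightarrow> (\<exists>j. is_join DM S j) \<and> dist_join DM S"
      using H by (elim conjE)
    show "\<forall>S. S \<subseteq> (DM :: 'a set set) \<and> ordLess2 (card_of S) \<kappa> \<longrightarrow> dist_join DM S"
    proof (intro allI impI)
      fix S :: "'a set set" assume S: "S \<subseteq> DM \<and> ordLess2 (card_of S) \<kappa>"
      show "dist_join DM S" using H2[rule_format, OF S] by (elim conjE)
    qed
  qed
  have P2: "kappa_frame (DM :: 'a set set) \<kappa> \<longleftrightarrow> BL_kappa_DM \<kappa> = (DM :: 'a set set)"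
  proof
    assume kf: "kappa_frame (DM :: 'a set set) \<kappa>"
    show "BL_kappa_DM \<kappa> = (DM :: 'a set set)"
    proof (rule set_eqI, rule iffI)
      fix N :: "'a set" assume "N \<in> BL_kappa_DM \<kappa>"
      then show "N \<in> DM" by (rule BLk_sub_DM[OF kf])
    next
      fix N :: "'a set" assume "N \<in> DM"
      then show "N \<in> BL_kappa_DM \<kappa>" by (rule BL_kappa_DM.gen)
    qed
  next
    assume eq: "BL_kappa_DM \<kappa> = (DM :: 'a set set)"
    have DJ: "dist_join DM S" if S: "S \<subseteq> (DM :: 'a set set)" and card: "ordLess2 (card_of S) \<kappa>" for S
    proof -
      define c where "c = \<Inter>{I. D_ideal I \<and> \<Union>S \<subseteq> I}"
      have cBL: "D_ideal c" unfolding c_def by (rule Inter_BL) blast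
      have sc: "s \<subseteq> c" if "s \<in> S" for s
        unfolding c_def
      proof (rule Inter_greatest)
        fix I assume "I \<in> {I. D_ideal I \<and> \<Union>S \<subseteq> I}"
        then have "\<Union>S \<subseteq> I" by blast
        then show "s \<subseteq> I" using that by blast
      qed
      have jBL: "is_join BL S c"
        unfolding is_join_def
      proof (intro conjI ballI impI)
        show "c \<in> BL" unfolding BL_iff by (rule cBL)
        show "s \<subseteq> c" if "s \<in> S" for s using sc that .
        show "c \<subseteq> u" if "u \<in> BL" "\<forall>s\<in>S. s \<subseteq> u" for u
        proof -
          have "D_ideal u" using that(1) unfolding BL_iff .
          moreover have "\<Union>S \<subseteq> u" using that(2) by blast
          ultimately show ?thesis unfolding c_def by (intro Inter_lower CollectI conjI)
        qed
      qed
      have "S \<in> Pow (BL_kappa_DM \<kappa>)" unfolding eq Pow_iff by (rule S)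
      then have "c \<in> BL_kappa_DM \<kappa>" by (rule BL_kappa_DM.join[OF _ card jBL])
      then have cDM: "c \<in> DM" unfolding eq .
      have jc: "is_join DM S c"
        unfolding is_join_def
      proof (intro conjI ballI impI)
        show "c \<in> DM" by (rule cDM)
        show "s \<subseteq> c" if "s \<in> S" for s using sc that .
        show "c \<subseteq> u" if "u \<in> DM" "\<forall>s\<in>S. s \<subseteq> u" for u
        proof -
          have "D_ideal u" using DM_BL[OF that(1)] .
          moreover have "\<Union>S \<subseteq> u" using that(2) by blast
          ultimately show ?thesis unfolding c_def by (intro Inter_lower CollectI conjI)
        qed
      qed
      show ?thesis
        unfolding dist_join_def
      proof (rule exI[of _ c], intro conjI ballI allI impI)
        show "is_join DM S c" by (rule jc)
        fix a m assume a: "a \<in> DM" and mm: "is_meet DM {a, c} m"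
        have m: "m = a \<inter> c" using mm unfolding is_meet_DM2[OF a cDM] .
        have mm2: "is_meet DM {a,s} x \<longleftrightarrow> x = a \<inter> s" if "s \<in> S" for s x
        proof -
          have "s \<in> DM" using S that by blast
          then show ?thesis by (rule is_meet_DM2[OF a])
        qed
        have eq2: "{x. \<exists>s\<in>S. is_meet DM {a,s} x} = (\<lambda>s. a \<inter> s) ` S"
        proof (rule set_eqI)
          fix x
          have "x \<in> {x. \<exists>s\<in>S. is_meet DM {a,s} x} \<longleftrightarrow> (\<exists>s\<in>S. is_meet DM {a,s} x)"
            by (rule mem_Collect_eq)
          also have "\<dots> \<longleftrightarrow> (\<exists>s\<in>S. x = a \<inter> s)"
            by (rule bex_cong[OF refl mm2])
          also have "\<dots> \<longleftrightarrow> x \<in> (\<lambda>s. a \<inter> s) ` S" by blast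
          finally show "x \<in> {x. \<exists>s\<in>S. is_meet DM {a,s} x} \<longleftrightarrow> x \<in> (\<lambda>s. a \<inter> s) ` S" .
        qed
        have "is_join DM ((\<lambda>s. a \<inter> s) ` S) (a \<inter> c)"
          unfolding is_join_def
        proof (intro conjI ballI impI)
          show "a \<inter> c \<in> DM" by (rule Int_DM[OF a cDM])
          show "x \<subseteq> a \<inter> c" if xin: "x \<in> (\<lambda>s. a \<inter> s) ` S" for x
          proof -
            obtain s where s: "s \<in> S" "x = a \<inter> s" using xin by blast
            have "s \<subseteq> c" by (rule sc[OF s(1)])
            then show ?thesis unfolding s(2) by blast
          qed
          fix u assume u: "u \<in> DM" "\<forall>x\<in>(\<lambda>s. a \<inter> s) ` S. x \<subseteq> u"
          have "a \<inter> \<Inter>{I. D_ideal I \<and> \<Union>S \<subseteq> I} \<subseteq> u"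
          proof (rule frame_law)
            show "downset a" using DM_BL[OF a] unfolding D_ideal_def by (elim conjE)
            show "D_ideal u" using DM_BL[OF u(1)] .
            show "\<forall>s\<in>S. downset s"
            proof
              fix s assume "s \<in> S"
              then have "s \<in> DM" using S by blast
              then have "D_ideal s" by (rule DM_BL)
              then show "downset s" unfolding D_ideal_def by (elim conjE)
            qed
            show "\<forall>s\<in>S. a \<inter> s \<subseteq> u"
            proof (rule ballI)
              fix s assume "s \<in> S"
              then have "a \<inter> s \<in> (\<lambda>s. a \<inter> s) ` S" by (rule imageI)
              then show "a \<inter> s \<subseteq> u" by (rule bspec[OF u(2)])
            qed
          qed
          then show "a \<inter> c \<subseteq> u" unfolding c_def .
        qed
        then show "is_join DM {x. \<exists>s\<in>S. is_meet DM {a,s} x} m"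
          by (rule join_cong[OF _ eq2 m])
      qed
    qed
    show "kappa_frame (DM :: 'a set set) \<kappa>"
      unfolding kappa_frame_def
    proof (rule conjI[OF ms], intro allI impI)
      fix S :: "'a set set" assume S: "S \<subseteq> DM \<and> ordLess2 (card_of S) \<kappa>"
      then have S1: "S \<subseteq> DM" and S2: "ordLess2 (card_of S) \<kappa>" by blast+
      have "is_join DM S (lbs (ubs (\<Union>S)))" by (rule DM_join[OF S1])
      then show "(\<exists>j. is_join DM S j) \<and> dist_join DM S"
        using DJ[OF S1 S2] by blast
    qed
  qed
  show ?thesis by (rule conjI[OF P1 P2])
qed

end
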